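(* The functor $\vec{\mathrm{Sp}}$ from the category of multipointed $d$-spaces to the category of directed spaces is a left adjoint. Its right adjoint is the functor $\vec{\Omega}$ from directed spaces to multipointed $d$-spaces which takes a directed space $(|Y|,d(Y))$ to the multipointed $d$-space $(|Y|,|Y|,d(Y))$ (all points are states and the execution paths are the directed paths), and acts as the identity on underlying continuous maps.
   Context: Let $\mathbf{Top}$ be the category of $\Delta$-generated spaces (or of $\Delta$-Hausdorff $\Delta$-generated spaces). For $\ell>0$ let $\mu_\ell(t)=t/\ell$, $\mu_\ell:[0,\ell]\to[0,1]$. $\mathcal{M}(\ell,\ell')$ is the set of non-decreasing surjective continuous maps $[0,\ell]\to[0,\ell']$; $\mathcal{I}(\ell)$ is the set of non-decreasing continuous maps $[0,1]\to[0,\ell]$ (constant maps allowed). The Moore composition of paths $\gamma_1:[0,\ell_1]\to U$, $\gamma_2:[0,\ell_2]\to U$ with $\gamma_1(\ell_1)=\gamma_2(0)$ is $\gamma_1*\gamma_2:[0,\ell_1+\ell_2]\to U$, equal to $\gamma_1(t)$ on $[0,\ell_1]$ and $\gamma_2(t-\ell_1)$ on $[\ell_1,\ell_1+\ell_2]$. The normalized composition of $\gamma_1,\gamma_2:[0,1]\to U$ is $\gamma_1*_N\gamma_2=(\gamma_1\mu_{1/2})*(\gamma_2\mu_{1/2})$. A multipointed $d$-space is a triple $X=(|X|,X^0,\mathbb{P}^{\mathrm{top}}X)$: a space $|X|$, a subset $X^0\subset|X|$ of states, and a set $\mathbb{P}^{\mathrm{top}}X$ of continuous maps $[0,1]\to|X|$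 (execution paths) with endpoints in $X^0$, closed under precomposition by elements of $\mathcal{M}(1,1)$ and under normalized composition. Maps are continuous maps preserving states and execution paths. A directed space is a pair $Y=(|Y|,d(Y))$ with $d(Y)$ a set of continuous maps $[0,1]\to|Y|$ containing the constant paths, closed under normalized composition and under precomposition by elements of $\mathcal{I}(1)$; morphisms are continuous maps preserving directed paths. For a multipointed $d$-space $X$, $\vec{\mathrm{Sp}}(X)$ is the directed space $(|X|,d(X))$ where $d(X)$ consists of all constant paths and all Moore compositions $(\gamma_1\phi_1\mu_{\ell_1})*\dots*(\gamma_n\phi_n\mu_{\ell_n})$ with $n\ge1$, $\ell_i>0$, $\sum_i\ell_i=1$, $\gamma_i$ execution paths of $X$ and $\phi_i\in\mathcal{I}(1)$; on maps, $\vec{\mathrm{Sp}}$ is the identity on underlying continuous maps. *)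

theory Defs
  imports "HOL-Analysis.Analysis" "HOL-Homology.Homology"
begin

definition simplex_top :: "nat \<Rightarrow> (nat \<Rightarrow> real) topology" where
  "simplex_top n = subtopology (powertop_real UNIV) (standard_simplex n)"

definition delta_generated :: "'a topology \<Rightarrow> bool" where
  "delta_generated X \<longleftrightarrow>
     (\<forall>U. U \<subseteq> topspace X \<longrightarrow>
        (openin X U \<longleftrightarrow>
          (\<forall>n \<sigma>. continuous_map (simplex_top n) X \<sigma> \<longrightarrow>
              openin (simplex_top n) {x \<in> topspace (simplex_top n). \<sigma> x \<in> U})))"

text \<open>A path [0,1] -> |X| is represented by a function real => 'a; only its values on
  [0,1] matter. Membership of a path in a set of paths is therefore taken modulo
  agreement on [0,1].\<close>
definition path_in :: "(real \<Rightarrow> 'a) \<Rightarrow> (real \<Rightarrow> 'a) set \<Rightarrow> bool" where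
  "path_in \<gamma> P \<longleftrightarrow> (\<exists>\<delta>\<in>P. \<forall>t\<in>{0..1}. \<gamma> t = \<delta> t)"

definition is_path :: "'a topology \<Rightarrow> (real \<Rightarrow> 'a) \<Rightarrow> bool" where
  "is_path X \<gamma> \<longleftrightarrow> continuous_map (top_of_set {0..1}) X \<gamma>"

definition M11 :: "(real \<Rightarrow> real) \<Rightarrow> bool" where
  "M11 \<phi> \<longleftrightarrow> mono_on {0..1} \<phi> \<and> \<phi> ` {0..1} = {0..1} \<and> continuous_on {0..1} \<phi>"

definition I1 :: "(real \<Rightarrow> real) \<Rightarrow> bool" where
  "I1 \<phi> \<longleftrightarrow> mono_on {0..1} \<phi> \<and> \<phi> ` {0..1} \<subseteq> {0..1} \<and> continuous_on {0..1} \<phi>"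

definition ncomp :: "(real \<Rightarrow> 'a) \<Rightarrow> (real \<Rightarrow> 'a) \<Rightarrow> real \<Rightarrow> 'a" where
  "ncomp \<gamma>1 \<gamma>2 = (\<lambda>t. if t \<le> 1/2 then \<gamma>1 (2 * t) else \<gamma>2 (2 * t - 1))"

text \<open>Moore composition of a nonempty list of pairs (c_i, l_i), c_i : [0,1] -> U,
  of the paths c_i mu_{l_i} : [0,l_i] -> U.\<close>
fun moore :: "((real \<Rightarrow> 'a) \<times> real) list \<Rightarrow> real \<Rightarrow> 'a" where
  "moore [] = (\<lambda>t. undefined)"
| "moore [(c, l)] = (\<lambda>t. c (t / l))"
| "moore ((c, l) # rest) = (\<lambda>t. if t \<le> l then c (t / l) else moore rest (t - l))"

definition composable :: "((real \<Rightarrow> 'a) \<times> real) list \<Rightarrow> bool" where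
  "composable cs \<longleftrightarrow>
     (\<forall>i. Suc i < length cs \<longrightarrow> fst (cs ! i) 1 = fst (cs ! Suc i) 0)"

type_synonym 'a mdspace = "'a topology \<times> 'a set \<times> (real \<Rightarrow> 'a) set"

definition mdspace :: "'a mdspace \<Rightarrow> bool" where
  "mdspace X \<longleftrightarrow> (case X of (T, S, P) \<Rightarrow>
     delta_generated T \<and> S \<subseteq> topspace T \<and>
     (\<forall>\<gamma>\<in>P. is_path T \<gamma> \<and> \<gamma> 0 \<in> S \<and> \<gamma> 1 \<in> S) \<and>
     (\<forall>\<gamma>\<in>P. \<forall>\<phi>. M11 \<phi> \<longrightarrow> path_in (\<gamma> \<circ> \<phi>) P) \<and>
     (\<forall>\<gamma>1\<in>P. \<forall>\<gamma>2\<in>P. \<gamma>1 1 = \<gamma>2 0 \<longrightarrow> path_in (ncomp \<gamma>1 \<gamma>2) P))"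

definition mdmap :: "'a mdspace \<Rightarrow> 'b mdspace \<Rightarrow> ('a \<Rightarrow> 'b) \<Rightarrow> bool" where
  "mdmap X Y f \<longleftrightarrow> (case X of (T, S, P) \<Rightarrow> case Y of (T', S', P') \<Rightarrow>
     continuous_map T T' f \<and> f ` S \<subseteq> S' \<and> (\<forall>\<gamma>\<in>P. path_in (f \<circ> \<gamma>) P'))"

type_synonym 'a dspace = "'a topology \<times> (real \<Rightarrow> 'a) set"

definition dspace :: "'a dspace \<Rightarrow> bool" where
  "dspace Y \<longleftrightarrow> (case Y of (T, D) \<Rightarrow>
     delta_generated T \<and>
     (\<forall>\<gamma>\<in>D. is_path T \<gamma>) \<and>
     (\<forall>x\<in>topspace T. path_in (\<lambda>t. x) D) \<and>
     (\<forall>\<gamma>\<in>D. \<forall>\<phi>. I1 \<phi> \<longrightarrow> path_in (\<gamma> \<circ> \<phi>) D) \<and>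
     (\<forall>\<gamma>1\<in>D. \<forall>\<gamma>2\<in>D. \<gamma>1 1 = \<gamma>2 0 \<longrightarrow> path_in (ncomp \<gamma>1 \<gamma>2) D))"

definition dmap :: "'a dspace \<Rightarrow> 'b dspace \<Rightarrow> ('a \<Rightarrow> 'b) \<Rightarrow> bool" where
  "dmap X Y f \<longleftrightarrow> (case X of (T, D) \<Rightarrow> case Y of (T', D') \<Rightarrow>
     continuous_map T T' f \<and> (\<forall>\<gamma>\<in>D. path_in (f \<circ> \<gamma>) D'))"

definition sp_paths :: "'a topology \<Rightarrow> (real \<Rightarrow> 'a) set \<Rightarrow> (real \<Rightarrow> 'a) set" where
  "sp_paths T P =
     {(\<lambda>t. x) | x. x \<in> topspace T} \<union>
     {moore cs | cs. cs \<noteq> [] \<and>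
        (\<forall>(c, l)\<in>set cs. 0 < l \<and> (\<exists>\<gamma>\<in>P. \<exists>\<phi>. I1 \<phi> \<and> c = \<gamma> \<circ> \<phi>)) \<and>
        sum_list (map snd cs) = 1 \<and> composable cs}"

definition Sp :: "'a mdspace \<Rightarrow> 'a dspace" where
  "Sp X = (case X of (T, S, P) \<Rightarrow> (T, sp_paths T P))"

definition Omega :: "'a dspace \<Rightarrow> 'a mdspace" where
  "Omega Y = (case Y of (T, D) \<Rightarrow> (T, topspace T, D))"

end

theory Submission imports Defs begin

definition gcomp :: "real \<Rightarrow> (real \<Rightarrow> 'a) \<Rightarrow> (real \<Rightarrow> 'a) \<Rightarrow> real \<Rightarrow> 'a" where
  "gcomp s a b = (\<lambda>t. if t \<le> s then a (t / s) else b ((t - s) / (1 - s)))"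

definition scl :: "real \<Rightarrow> ((real \<Rightarrow> 'a) \<times> real) list \<Rightarrow> ((real \<Rightarrow> 'a) \<times> real) list" where
  "scl a cs = map (\<lambda>(c, l). (c, a * l)) cs"

definition lgood :: "((real \<Rightarrow> 'a) \<times> real) list \<Rightarrow> bool" where
  "lgood cs \<longleftrightarrow> cs \<noteq> [] \<and> (\<forall>(c, l)\<in>set cs. 0 < l) \<and> sum_list (map snd cs) = 1 \<and> composable cs"

lemma composable_Nil[simp]: "composable []" and composable_single[simp]: "composable [x]"
  by (auto simp: composable_def)

lemma composable_Cons2[simp]: "composable (x # y # r) \<longleftrightarrow> fst x 1 = fst y 0 \<and> composable (y # r)"
  unfolding composable_def
proof safe
  fix i assume "\<forall>i. Suc i < length (x # y # r) \<longrightarrow> fst ((x # y # r) ! i) 1 = fst ((x # y # r) ! Suc i) 0"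
    "Suc i < length (y # r)"
  then show "fst ((y # r) ! i) 1 = fst ((y # r) ! Suc i) 0" by (auto dest: spec[of _ "Suc i"])
next
  assume "\<forall>i. Suc i < length (x # y # r) \<longrightarrow> fst ((x # y # r) ! i) 1 = fst ((x # y # r) ! Suc i) 0"
  then show "fst x 1 = fst y 0" by (auto dest: spec[of _ 0])
next
  fix i assume "fst x 1 = fst y 0" "\<forall>i. Suc i < length (y # r) \<longrightarrow> fst ((y # r) ! i) 1 = fst ((y # r) ! Suc i) 0"
    "Suc i < length (x # y # r)"
  then show "fst ((x # y # r) ! i) 1 = fst ((x # y # r) ! Suc i) 0"
    by (cases i) auto
qed

lemma composable_Cons: "composable (x # r) \<longleftrightarrow> (r = [] \<or> fst x 1 = fst (hd r) 0) \<and> composable r"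
  by (cases r) auto

lemma composable_append: "xs \<noteq> [] \<Longrightarrow> ys \<noteq> [] \<Longrightarrow>
  composable (xs @ ys) \<longleftrightarrow> composable xs \<and> composable ys \<and> fst (last xs) 1 = fst (hd ys) 0"
  by (induction xs rule: induct_list012) (auto simp: composable_Cons)

lemma composable_scl[simp]: "composable (scl a cs) \<longleftrightarrow> composable cs"
  by (induction cs rule: induct_list012) (auto simp: scl_def split: prod.splits)

lemma moore_scl: "0 < a \<Longrightarrow> moore (scl a cs) t = moore cs (t / a)"
proof (induction cs arbitrary: t rule: moore.induct)
  case (3 c l v va)
  have "moore (scl a ((c, l) # v # va)) t = (if t \<le> a * l then c (t / (a * l)) else moore (scl a (v # va)) (t - a * l))"
    by (simp add: scl_def split: prod.splits)
  moreover have "(t \<le> a * l) = (t / a \<le> l)" using 3(2) by (simp add: pos_divide_le_eq mult.commute)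
  moreover have "t / (a * l) = t / a / l" by simp
  moreover have "(t - a * l) / a = t / a - l" using 3(2) by (simp add: diff_divide_distrib)
  ultimately show ?case using 3 by simp
qed (auto simp: scl_def)

lemma sum_scl[simp]: "sum_list (map snd (scl a cs)) = a * sum_list (map snd cs)"
  by (induction cs) (auto simp: scl_def algebra_simps split: prod.splits)

lemma set_scl: "set (scl a cs) = (\<lambda>(c,l). (c, a*l)) ` set cs"
  by (simp add: scl_def)

lemma fst_set_scl: "fst ` set (scl a cs) = fst ` set cs"
  by (force simp: scl_def)

lemma sum_pos: "(cs :: ((real \<Rightarrow> 'a) \<times> real) list) \<noteq> [] \<Longrightarrow> \<forall>(c, l)\<in>set cs. 0 < l \<Longrightarrow> 0 < sum_list (map snd cs)"
proof (induction cs)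
  case (Cons x xs)
  show ?case
  proof (cases xs)
    case Nil then show ?thesis using Cons.prems by auto
  next
    case (Cons y ys)
    then have "0 < sum_list (map snd xs)" using Cons.IH \<open>\<forall>(c, l)\<in>set (x # xs). 0 < l\<close> by auto
    moreover have "0 < snd x" using \<open>\<forall>(c, l)\<in>set (x # xs). 0 < l\<close> by auto
    ultimately show ?thesis by (simp add: add_pos_pos)
  qed
qed simp

lemma moore_append: "xs \<noteq> [] \<Longrightarrow> ys \<noteq> [] \<Longrightarrow> \<forall>(c, l)\<in>set xs. 0 < l \<Longrightarrow>
  moore (xs @ ys) t = (if t \<le> sum_list (map snd xs) then moore xs t else moore ys (t - sum_list (map snd xs)))"
proof (induction xs arbitrary: t rule: moore.induct)
  case (2 c l) then show ?case by (cases ys) auto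
next
  case (3 c l v va)
  have "0 < sum_list (map snd (v # va))" using 3(4) by (intro sum_pos) auto
  then show ?case using 3 by (auto simp: algebra_simps)
qed auto

lemma moore_0: "cs \<noteq> [] \<Longrightarrow> \<forall>(c, l)\<in>set cs. 0 < l \<Longrightarrow> moore cs 0 = fst (hd cs) 0"
  by (induction cs rule: moore.induct) auto

lemma moore_end: "cs \<noteq> [] \<Longrightarrow> \<forall>(c, l)\<in>set cs. 0 < l \<Longrightarrow> moore cs (sum_list (map snd cs)) = fst (last cs) 1"
proof (induction cs rule: moore.induct)
  case (3 c l v va)
  have s: "0 < sum_list (map snd (v # va))"
    using 3(3) by (intro sum_pos) auto
  have "moore ((c, l) # v # va) (sum_list (map snd ((c, l) # v # va))) = moore (v # va) (sum_list (map snd (v # va)))"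
    using s by simp
  also have "\<dots> = fst (last (v # va)) 1" using 3(1)[of "l+1"] 3(3) by auto
  finally show ?case by simp
qed auto

lemma moore_single1[simp]: "moore [(c, 1)] = c" by auto


lemma path_in_cong: "(\<forall>t\<in>{0..1}. g t = g' t) \<Longrightarrow> path_in g D \<longleftrightarrow> path_in g' D"
  unfolding path_in_def by auto

lemma path_in_mem: "d \<in> D \<Longrightarrow> path_in d D"
  unfolding path_in_def by auto

lemma gcomp_cong:
  assumes "0 < s" "s < 1" "\<forall>t\<in>{0..1}. a t = a' t" "\<forall>t\<in>{0..1}. b t = b' t"
  shows "\<forall>t\<in>{0..1}. gcomp s a b t = gcomp s a' b' t"
proof
  fix t :: real assume t: "t \<in> {0..1}"
  show "gcomp s a b t = gcomp s a' b' t"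
  proof (cases "t \<le> s")
    case True
    then have "t / s \<in> {0..1}" using t assms by auto
    then show ?thesis using True assms by (simp add: gcomp_def)
  next
    case False
    then have "(t - s) / (1 - s) \<in> {0..1}" using t assms by auto
    then show ?thesis using False assms by (simp add: gcomp_def)
  qed
qed

lemma ncomp_gcomp: "ncomp a b = gcomp (1/2) a b"
proof -
  have "\<And>t. (t - 1/2) / (1 - 1/2) = 2 * t - (1::real)" by (simp add: field_simps)
  then show ?thesis by (simp add: ncomp_def gcomp_def fun_eq_iff mult.commute)
qed

lemma I1_range: "I1 c \<Longrightarrow> t \<in> {0..1} \<Longrightarrow> c t \<in> {0..1}"
  unfolding I1_def by blast

lemma I1_const: "a \<in> {0..1} \<Longrightarrow> I1 (\<lambda>_. a)"
  unfolding I1_def by (auto simp: mono_on_def)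

lemma I1_id: "I1 (\<lambda>t. t)"
  unfolding I1_def by (auto simp: mono_on_def)

lemma I1_comp: "I1 f \<Longrightarrow> I1 g \<Longrightarrow> I1 (f \<circ> g)"
  unfolding I1_def
proof (intro conjI)
  assume f: "mono_on {0..1} f \<and> f ` {0..1} \<subseteq> {0..1} \<and> continuous_on {0..1} f"
     and g: "mono_on {0..1} g \<and> g ` {0..1} \<subseteq> {0..1} \<and> continuous_on {0..1} g"
  show "mono_on {0..1} (f \<circ> g)" using f g unfolding mono_on_def by (simp add: image_subset_iff)
  show "(f \<circ> g) ` {0..1} \<subseteq> {0..1}" using f g by auto
  show "continuous_on {0..1} (f \<circ> g)" using f g by (meson continuous_on_compose continuous_on_subset)
qed

lemma M11_I1: "M11 f \<Longrightarrow> I1 f"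
  unfolding M11_def I1_def by auto

lemma lgood_single: "lgood [(c, l)] \<longleftrightarrow> l = 1"
  by (auto simp: lgood_def)

lemma moore_decomp:
  assumes "lgood ((c, l) # r)" "r \<noteq> []"
  shows "0 < l \<and> l < 1 \<and> lgood (scl (1 / (1 - l)) r) \<and> fst ` set (scl (1 / (1 - l)) r) = fst ` set r
    \<and> moore ((c, l) # r) = gcomp l c (moore (scl (1 / (1 - l)) r)) \<and> c 1 = moore (scl (1 / (1 - l)) r) 0
    \<and> length (scl (1 / (1 - l)) r) < length ((c, l) # r)"
proof -
  have pos: "\<forall>(c, l)\<in>set r. 0 < l" and l0: "0 < l" and sum: "l + sum_list (map snd r) = 1"
    and comp: "composable ((c, l) # r)"
    using assms by (auto simp: lgood_def)
  have sr: "0 < sum_list (map snd r)" using sum_pos[OF assms(2) pos] .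
  then have l1: "l < 1" using sum by linarith
  define a where "a = 1 / (1 - l)"
  have a: "0 < a" using l1 by (simp add: a_def)
  have "sum_list (map snd (scl a r)) = 1" using sum l1 by (simp add: a_def)
  moreover have "composable (scl a r)" using comp by (simp add: composable_Cons)
  moreover have "\<forall>(c, l)\<in>set (scl a r). 0 < l" using pos a by (auto simp: set_scl)
  moreover have "scl a r \<noteq> []" using assms(2) by (simp add: scl_def)
  ultimately have "lgood (scl a r)" unfolding lgood_def by blast
  moreover have "moore ((c, l) # r) = gcomp l c (moore (scl a r))"
  proof
    fix t
    obtain v va where r: "r = v # va" using assms(2) by (cases r) auto
    have "(t - l) / (1 - l) / a = t - l" using l1 by (simp add: a_def)
    then show "moore ((c, l) # r) t = gcomp l c (moore (scl a r)) t"
      using r a by (simp add: gcomp_def moore_scl)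
  qed
  moreover have "c 1 = moore (scl a r) 0"
    using a moore_0[OF assms(2) pos] comp assms(2) by (simp add: moore_scl composable_Cons)
  moreover have "length (scl a r) < length ((c, l) # r)" by (simp add: scl_def)
  moreover note fst_set_scl[of a r]
  ultimately show ?thesis using l0 l1 unfolding a_def[symmetric] by blast
qed

lemma good_induct:
  assumes "lgood cs" "\<forall>x\<in>set cs. R (fst x)"
    and single: "\<And>c. R c \<Longrightarrow> Q c"
    and comp: "\<And>l c \<rho>. 0 < l \<Longrightarrow> l < 1 \<Longrightarrow> R c \<Longrightarrow> Q \<rho> \<Longrightarrow> c 1 = \<rho> 0 \<Longrightarrow> Q (gcomp l c \<rho>)"
  shows "Q (moore cs)"
  using assms(1,2)
proof (induction "length cs" arbitrary: cs rule: less_induct)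
  case less
  obtain c l r where cs: "cs = (c, l) # r" using less.prems by (cases cs) (auto simp: lgood_def)
  show ?case
  proof (cases "r = []")
    case True
    then have "l = 1" using less.prems cs lgood_single by auto
    then have "moore cs = c" using True cs by simp
    moreover have "R c" using less.prems(2) cs by simp
    ultimately show ?thesis using single by simp
  next
    case False
    define a where "a = 1 / (1 - l)"
    note d = moore_decomp[OF less.prems(1)[unfolded cs] False, folded a_def]
    have l0: "0 < l" using d by (elim conjE) assumption
    have l1: "l < 1" using d by (elim conjE) assumption
    have lg: "lgood (scl a r)" using d by (elim conjE) assumption
    have mq: "moore ((c, l) # r) = gcomp l c (moore (scl a r))" using d by (elim conjE) assumption
    have e: "c 1 = moore (scl a r) 0" using d by (elim conjE) assumption
    have len: "length (scl a r) < length ((c, l) # r)" using d by (elim conjE) assumption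
    have "\<forall>x\<in>set (scl a r). R (fst x)" using less.prems(2) cs by (auto simp: set_scl)
    then have Qr: "Q (moore (scl a r))"
      using less.hyps[OF _ lg] len cs by simp
    have Rc: "R c" using less.prems(2) cs by simp
    have "Q (gcomp l c (moore (scl a r)))" by (rule comp[OF l0 l1 Rc Qr e])
    then show ?thesis using mq cs by simp
  qed
qed


lemma cm_comp:
  assumes "is_path T a" "continuous_on A h" "h ` A \<subseteq> {0..1}"
  shows "continuous_map (top_of_set A) T (a \<circ> h)"
proof (rule continuous_map_compose[of _ "top_of_set {0..1}"])
  show "continuous_map (top_of_set A) (top_of_set {0..1}) h"
    using assms(2,3) by (auto simp: continuous_map_subtopology_eu)
  show "continuous_map (top_of_set {0..1}) T a" using assms(1) by (simp add: is_path_def)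
qed

lemma is_path_gcomp:
  assumes s: "0 < s" "s < 1" and a: "is_path T a" and b: "is_path T b" and e: "a 1 = b 0"
  shows "is_path T (gcomp s a b)"
proof -
  have 1: "continuous_map (top_of_set ({0..1} \<inter> {x. x \<le> s})) T (a \<circ> (\<lambda>t. t / s))"
    by (rule cm_comp[OF a]) (use s in \<open>auto intro!: continuous_intros\<close>)
  have 2: "continuous_map (top_of_set ({0..1} \<inter> {x. s \<le> x})) T (b \<circ> (\<lambda>t. (t - s) / (1 - s)))"
    by (rule cm_comp[OF b]) (use s in \<open>auto intro!: continuous_intros simp: field_simps\<close>)
  have S1: "subtopology (top_of_set {0..1}) {x. x \<in> topspace (top_of_set {0..1}) \<and> x \<le> s}
      = top_of_set ({0..1} \<inter> {x. x \<le> s})"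
    unfolding subtopology_subtopology by (rule arg_cong[where f="subtopology euclidean"]) auto
  have S2: "subtopology (top_of_set {0..1}) {x. x \<in> topspace (top_of_set {0..1}) \<and> s \<le> x}
      = top_of_set ({0..1} \<inter> {x. s \<le> x})"
    unfolding subtopology_subtopology by (rule arg_cong[where f="subtopology euclidean"]) auto
  have "continuous_map (top_of_set {0..1}) T (\<lambda>t. if t \<le> s then a (t / s) else b ((t - s) / (1 - s)))"
  proof (rule continuous_map_cases_le[where p="\<lambda>x. x" and q="\<lambda>x. s"])
    show "continuous_map (top_of_set {0..1}) euclideanreal (\<lambda>x. x)" by simp
    show "continuous_map (top_of_set {0..1}) euclideanreal (\<lambda>x. s)" by simp
    show "continuous_map (subtopology (top_of_set {0..1}) {x. x \<in> topspace (top_of_set {0..1}) \<and> x \<le> s}) T (\<lambda>t. a (t / s))"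
      using 1 unfolding S1 by (simp add: o_def)
    show "continuous_map (subtopology (top_of_set {0..1}) {x. x \<in> topspace (top_of_set {0..1}) \<and> s \<le> x}) T (\<lambda>t. b ((t - s) / (1 - s)))"
      using 2 unfolding S2 by (simp add: o_def)
    show "\<And>x. x \<in> topspace (top_of_set {0..1}) \<Longrightarrow> x = s \<Longrightarrow> a (x / s) = b ((x - s) / (1 - s))"
      using s e by simp
  qed
  then show ?thesis by (simp add: is_path_def gcomp_def)
qed

definition pc :: "(real \<Rightarrow> 'a) set \<Rightarrow> (real \<Rightarrow> 'a) \<Rightarrow> bool" where
  "pc P c \<longleftrightarrow> (\<exists>g\<in>P. \<exists>\<phi>. I1 \<phi> \<and> c = g \<circ> \<phi>)"

lemma sp_moore: "lgood cs \<Longrightarrow> \<forall>x\<in>set cs. pc P (fst x) \<Longrightarrow> moore cs \<in> sp_paths T P"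
  unfolding sp_paths_def lgood_def pc_def by fastforce

lemma sp_const: "x \<in> topspace T \<Longrightarrow> (\<lambda>t. x) \<in> sp_paths T P"
  unfolding sp_paths_def by blast

lemma sp_cases: "d \<in> sp_paths T P \<Longrightarrow>
   (\<exists>x\<in>topspace T. d = (\<lambda>t. x)) \<or> (\<exists>cs. lgood cs \<and> (\<forall>x\<in>set cs. pc P (fst x)) \<and> d = moore cs)"
  unfolding sp_paths_def lgood_def pc_def by fastforce

lemma pc_const: "pc P c \<Longrightarrow> a \<in> {0..1} \<Longrightarrow> pc P (\<lambda>_. c a)"
proof -
  assume "pc P c" "a \<in> {0..1}"
  then obtain g \<phi> where g: "g \<in> P" "I1 \<phi>" "c = g \<circ> \<phi>" unfolding pc_def by blast
  have "I1 (\<lambda>_. \<phi> a)" using I1_const I1_range[OF g(2) \<open>a \<in> {0..1}\<close>] by blast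
  moreover have "(\<lambda>_. c a) = g \<circ> (\<lambda>_. \<phi> a)" using g by (simp add: o_def)
  ultimately show ?thesis using g unfolding pc_def by blast
qed

lemma pc_I1: "pc P c \<Longrightarrow> I1 ch \<Longrightarrow> path_in (c \<circ> ch) (sp_paths T P)"
proof -
  assume "pc P c" "I1 ch"
  then obtain g \<phi> where g: "g \<in> P" "I1 \<phi>" "c = g \<circ> \<phi>" unfolding pc_def by blast
  have "pc P (g \<circ> (\<phi> \<circ> ch))" using g I1_comp[OF g(2) \<open>I1 ch\<close>] unfolding pc_def by blast
  then have "moore [(g \<circ> (\<phi> \<circ> ch), 1)] \<in> sp_paths T P" by (intro sp_moore) (auto simp: lgood_single)
  then show ?thesis using g by (intro path_in_mem) (simp add: o_def)
qed

lemma hd_scl: "cs \<noteq> [] \<Longrightarrow> fst (hd (scl a cs)) = fst (hd cs)"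
  by (cases cs) (auto simp: scl_def split: prod.splits)

lemma last_scl: "cs \<noteq> [] \<Longrightarrow> fst (last (scl a cs)) = fst (last cs)"
  by (induction cs rule: induct_list012) (auto simp: scl_def split: prod.splits)

lemma lgood_ends:
  assumes "lgood cs"
  shows "moore cs 0 = fst (hd cs) 0" "moore cs 1 = fst (last cs) 1"
  using assms moore_0 moore_end unfolding lgood_def by metis+

lemma gcomp_moore:
  assumes r: "0 < r" "r < 1" and g: "lgood cs1" "lgood cs2"
  shows "gcomp r (moore cs1) (moore cs2) = moore (scl r cs1 @ scl (1 - r) cs2)"
proof
  fix t
  have ne: "scl r cs1 \<noteq> []" "scl (1 - r) cs2 \<noteq> []" using g by (auto simp: lgood_def scl_def)
  have pos: "\<forall>(c, l)\<in>set (scl r cs1). 0 < l" using g r by (auto simp: lgood_def set_scl)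
  have sm: "sum_list (map snd cs1) = 1" using g by (simp add: lgood_def)
  have "moore (scl r cs1 @ scl (1 - r) cs2) t = (if t \<le> r then moore (scl r cs1) t else moore (scl (1 - r) cs2) (t - r))"
    using moore_append[OF ne pos] sm by simp
  then show "gcomp r (moore cs1) (moore cs2) t = moore (scl r cs1 @ scl (1 - r) cs2) t"
    using r by (simp add: gcomp_def moore_scl)
qed

lemma lgood_app:
  assumes r: "0 < r" "r < 1" and g: "lgood cs1" "lgood cs2" and e: "moore cs1 1 = moore cs2 0"
  shows "lgood (scl r cs1 @ scl (1 - r) cs2)"
proof -
  have ne: "scl r cs1 \<noteq> []" "scl (1 - r) cs2 \<noteq> []" using g by (auto simp: lgood_def scl_def)
  have "fst (last (scl r cs1)) = fst (last cs1)" using g by (simp add: last_scl lgood_def)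
  moreover have "fst (hd (scl (1 - r) cs2)) = fst (hd cs2)" using g by (simp add: hd_scl lgood_def)
  ultimately have "fst (last (scl r cs1)) 1 = fst (hd (scl (1 - r) cs2)) 0"
    using e lgood_ends[OF g(1)] lgood_ends[OF g(2)] by simp
  then have "composable (scl r cs1 @ scl (1 - r) cs2)"
    using composable_append[OF ne] g by (simp add: lgood_def)
  moreover have "\<forall>(c, l)\<in>set (scl r cs1 @ scl (1 - r) cs2). 0 < l" using g r by (auto simp: lgood_def set_scl)
  moreover have "sum_list (map snd (scl r cs1 @ scl (1 - r) cs2)) = 1" using g by (simp add: lgood_def)
  ultimately show ?thesis using ne unfolding lgood_def by simp
qed

lemma pcs_scl: "\<forall>x\<in>set cs. pc P (fst x) \<Longrightarrow> \<forall>x\<in>set (scl a cs). pc P (fst x)"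
  by (auto simp: set_scl)

lemma const_moore:
  assumes "lgood cs" "\<forall>y\<in>set cs. pc P (fst y)" "x = moore cs 0 \<or> x = moore cs 1"
  shows "\<exists>cs'. lgood cs' \<and> (\<forall>y\<in>set cs'. pc P (fst y)) \<and> moore cs' = (\<lambda>t. x)"
proof -
  have ne: "cs \<noteq> []" using assms(1) by (simp add: lgood_def)
  have "\<exists>c. pc P c \<and> (x = c 0 \<or> x = c 1)"
    using assms lgood_ends[OF assms(1)] hd_in_set[OF ne] last_in_set[OF ne] by metis
  then obtain c where c0: "pc P c" "x = c 0 \<or> x = c 1" by blast
  then have "\<exists>a\<in>{0..1}. x = c a" by auto
  then obtain a where c: "pc P c" "a \<in> {0..1}" "x = c a" using c0 by blast
  then have "pc P (\<lambda>_. x)" using pc_const by blast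
  then show ?thesis by (intro exI[of _ "[((\<lambda>_. x), 1)]"]) (auto simp: lgood_single)
qed

lemma sp_gcomp_mem:
  assumes r: "0 < r" "r < 1" and d: "d1 \<in> sp_paths T P" "d2 \<in> sp_paths T P" and e: "d1 1 = d2 0"
  shows "path_in (gcomp r d1 d2) (sp_paths T P)"
proof (cases "\<exists>x\<in>topspace T. d1 = (\<lambda>t. x)")
  case c1: True
  show ?thesis
  proof (cases "\<exists>x\<in>topspace T. d2 = (\<lambda>t. x)")
    case True
    with c1 e obtain x where "x \<in> topspace T" "d1 = (\<lambda>t. x)" "d2 = (\<lambda>t. x)" by auto
    then have "gcomp r d1 d2 = (\<lambda>t. x)" by (simp add: gcomp_def fun_eq_iff)
    then show ?thesis using sp_const[OF \<open>x \<in> topspace T\<close>] path_in_mem by metis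
  next
    case False
    then obtain cs2 where cs2: "lgood cs2" "\<forall>x\<in>set cs2. pc P (fst x)" "d2 = moore cs2" using sp_cases[OF d(2)] by blast
    from c1 obtain x where x: "d1 = (\<lambda>t. x)" by blast
    then have "x = moore cs2 0" using e cs2 by simp
    then obtain cs1 where cs1: "lgood cs1" "\<forall>x\<in>set cs1. pc P (fst x)" "d1 = moore cs1"
      using const_moore[OF cs2(1,2)] x by metis
    have "gcomp r d1 d2 = moore (scl r cs1 @ scl (1 - r) cs2)" using gcomp_moore[OF r cs1(1) cs2(1)] cs1 cs2 by simp
    moreover have "lgood (scl r cs1 @ scl (1 - r) cs2)" using lgood_app[OF r cs1(1) cs2(1)] e cs1 cs2 by simp
    ultimately show ?thesis using sp_moore[of "scl r cs1 @ scl (1 - r) cs2" P T] pcs_scl[OF cs1(2)] pcs_scl[OF cs2(2)] path_in_mem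
      by (metis Un_iff set_append)
  qed
next
  case False
  then obtain cs1 where cs1: "lgood cs1" "\<forall>x\<in>set cs1. pc P (fst x)" "d1 = moore cs1" using sp_cases[OF d(1)] by blast
  obtain cs2 where cs2: "lgood cs2" "\<forall>x\<in>set cs2. pc P (fst x)" "d2 = moore cs2"
  proof (cases "\<exists>x\<in>topspace T. d2 = (\<lambda>t. x)")
    case True
    then obtain x where x: "d2 = (\<lambda>t. x)" by blast
    then have "x = moore cs1 1" using e cs1 by simp
    then show ?thesis using const_moore[OF cs1(1,2)] x that by metis
  next
    case False
    then show ?thesis using sp_cases[OF d(2)] that by blast
  qed
  have "gcomp r d1 d2 = moore (scl r cs1 @ scl (1 - r) cs2)" using gcomp_moore[OF r cs1(1) cs2(1)] cs1 cs2 by simp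
  moreover have "lgood (scl r cs1 @ scl (1 - r) cs2)" using lgood_app[OF r cs1(1) cs2(1)] e cs1 cs2 by simp
  ultimately show ?thesis using sp_moore[of "scl r cs1 @ scl (1 - r) cs2" P T] pcs_scl[OF cs1(2)] pcs_scl[OF cs2(2)] path_in_mem
    by (metis Un_iff set_append)
qed

lemma sp_G:
  assumes r: "0 < r" "r < 1" and p: "path_in p (sp_paths T P)" and q: "path_in q (sp_paths T P)" and e: "p 1 = q 0"
  shows "path_in (gcomp r p q) (sp_paths T P)"
proof -
  obtain d1 where d1: "d1 \<in> sp_paths T P" "\<forall>t\<in>{0..1}. p t = d1 t" using p unfolding path_in_def by blast
  obtain d2 where d2: "d2 \<in> sp_paths T P" "\<forall>t\<in>{0..1}. q t = d2 t" using q unfolding path_in_def by blast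
  have "d1 1 = d2 0" using e d1 d2 by simp
  then have "path_in (gcomp r d1 d2) (sp_paths T P)" using sp_gcomp_mem[OF r d1(1) d2(1)] by blast
  moreover have "\<forall>t\<in>{0..1}. gcomp r p q t = gcomp r d1 d2 t" using gcomp_cong[OF r d1(2) d2(2)] .
  ultimately show ?thesis using path_in_cong by blast
qed


lemma aff1:
  fixes r u :: real
  assumes "0 < r" "r < 1" "0 \<le> u" "u \<le> 1"
  shows "0 \<le> r + (1 - r) * u \<and> r + (1 - r) * u \<le> 1 \<and> r \<le> r + (1 - r) * u"
proof -
  have h: "(1 - r) * u \<le> (1 - r) * 1" using assms by (intro mult_left_mono) auto
  have h0: "0 \<le> (1 - r) * u" using assms by simp
  show ?thesis using h h0 assms(1) by (smt (verit))
qed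

lemma gcomp_I1:
  assumes s: "0 < s" "s < 1" and e: "a 1 = b 0"
    and A: "\<And>k. I1 k \<Longrightarrow> path_in (a \<circ> k) D"
    and B: "\<And>k. I1 k \<Longrightarrow> path_in (b \<circ> k) D"
    and G: "\<And>r p q. 0 < r \<Longrightarrow> r < 1 \<Longrightarrow> path_in p D \<Longrightarrow> path_in q D \<Longrightarrow> p 1 = q 0 \<Longrightarrow> path_in (gcomp r p q) D"
    and X: "I1 ch"
  shows "path_in (gcomp s a b \<circ> ch) D"
proof -
  have mono: "\<And>x y. x \<in> {0..1} \<Longrightarrow> y \<in> {0..1} \<Longrightarrow> x \<le> y \<Longrightarrow> ch x \<le> ch y"
    using X unfolding I1_def mono_on_def by blast
  have rng: "\<And>t. t \<in> {0..1} \<Longrightarrow> ch t \<in> {0..1}" using I1_range[OF X] .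
  have cont: "continuous_on {0..1} ch" using X unfolding I1_def by blast
  consider "ch 1 \<le> s" | "s \<le> ch 0" | "ch 0 < s \<and> s < ch 1" by linarith
  then show ?thesis
  proof cases
    case 1
    have le: "\<And>t. t \<in> {0..1} \<Longrightarrow> ch t \<le> s" using mono[of _ 1] 1 by force
    have I: "I1 (\<lambda>t. ch t / s)"
      unfolding I1_def
    proof (intro conjI)
      show "mono_on {0..1} (\<lambda>t. ch t / s)" unfolding mono_on_def using mono s by (simp add: divide_right_mono)
      show "(\<lambda>t. ch t / s) ` {0..1} \<subseteq> {0..1}" using rng le s by auto
      show "continuous_on {0..1} (\<lambda>t. ch t / s)" using cont s by (intro continuous_intros) auto
    qed
    have "\<forall>t\<in>{0..1}. (gcomp s a b \<circ> ch) t = (a \<circ> (\<lambda>t. ch t / s)) t" using le by (simp add: gcomp_def)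
    then show ?thesis using A[OF I] path_in_cong by blast
  next
    case 2
    have ge: "\<And>t. t \<in> {0..1} \<Longrightarrow> s \<le> ch t" using mono[of 0] 2 by force
    have I: "I1 (\<lambda>t. (ch t - s) / (1 - s))"
      unfolding I1_def
    proof (intro conjI)
      show "mono_on {0..1} (\<lambda>t. (ch t - s) / (1 - s))" unfolding mono_on_def using mono s by (simp add: divide_right_mono)
      show "(\<lambda>t. (ch t - s) / (1 - s)) ` {0..1} \<subseteq> {0..1}" using rng ge s by auto
      show "continuous_on {0..1} (\<lambda>t. (ch t - s) / (1 - s))" using cont s by (intro continuous_intros) auto
    qed
    have "\<forall>t\<in>{0..1}. (gcomp s a b \<circ> ch) t = (b \<circ> (\<lambda>t. (ch t - s) / (1 - s))) t"
    proof
      fix t :: real assume t: "t \<in> {0..1}"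
      show "(gcomp s a b \<circ> ch) t = (b \<circ> (\<lambda>t. (ch t - s) / (1 - s))) t"
      proof (cases "ch t \<le> s")
        case True
        then have "ch t = s" using ge[OF t] by simp
        then show ?thesis using s e by (simp add: gcomp_def)
      next
        case False then show ?thesis by (simp add: gcomp_def)
      qed
    qed
    then show ?thesis using B[OF I] path_in_cong by blast
  next
    case 3
    obtain r where r: "0 \<le> r" "r \<le> 1" "ch r = s" using IVT'[of ch 0 s 1] 3 cont by auto
    have r0: "0 < r" using r 3 by (cases "r = 0") auto
    have r1: "r < 1" using r 3 by (cases "r = 1") auto
    define k1 where "k1 = (\<lambda>u. ch (r * u) / s)"
    define k2 where "k2 = (\<lambda>u. (ch (r + (1 - r) * u) - s) / (1 - s))"
    have im1: "(\<lambda>u. r * u) ` {0..1} \<subseteq> {0..r}" using r0 by (auto simp: mult_le_one)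
    have im2: "(\<lambda>u. r + (1 - r) * u) ` {0..1} \<subseteq> {r..1}"
    proof
      fix x assume "x \<in> (\<lambda>u. r + (1 - r) * u) ` {0..1}"
      then obtain u where u: "u \<in> {0..1}" "x = r + (1 - r) * u" by blast
      have h: "(1 - r) * u \<le> (1 - r) * 1" using u r1 by (intro mult_left_mono) auto
      have h0: "0 \<le> (1 - r) * u" using u r1 by simp
      show "x \<in> {r..1}" unfolding atLeastAtMost_iff using u(2) h h0 by (smt (verit))
    qed
    have im1': "(\<lambda>u. r * u) ` {0..1} \<subseteq> {0..1}" using r0 r1 by (auto simp: mult_le_one)
    have im2': "(\<lambda>u. r + (1 - r) * u) ` {0..1} \<subseteq> {0..1}"
    proof
      fix x assume "x \<in> (\<lambda>u. r + (1 - r) * u) ` {0..1}"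
      then obtain u where u: "u \<in> {0..1}" "x = r + (1 - r) * u" by blast
      then show "x \<in> {0..1}" using aff1[OF r0 r1, of u] by auto
    qed
    have I1k1: "I1 k1"
      unfolding I1_def
    proof (intro conjI)
      show "mono_on {0..1} k1" unfolding mono_on_def k1_def
      proof (intro allI impI)
        fix x y :: real assume "x \<in> {0..1} \<and> y \<in> {0..1} \<and> x \<le> y"
        moreover then have "r * x \<in> {0..1}" "r * y \<in> {0..1}" "r * x \<le> r * y" using im1 r1 r0
          by (auto intro: mult_left_mono simp: mult_le_one)
        ultimately show "ch (r * x) / s \<le> ch (r * y) / s" using mono s by (simp add: divide_right_mono)
      qed
      show "k1 ` {0..1} \<subseteq> {0..1}"
      proof
        fix x assume "x \<in> k1 ` {0..1}"
        then obtain u where u: "u \<in> {0..1}" "x = ch (r * u) / s" unfolding k1_def by blast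
        have ru: "r * u \<in> {0..1}" "r * u \<le> r" using u r0 r1 by (auto simp: mult_le_one mult_left_le)
        have "ch (r * u) \<le> s" using mono[OF ru(1) _ ru(2)] r by simp
        moreover have "0 \<le> ch (r * u)" using rng[OF ru(1)] by simp
        ultimately show "x \<in> {0..1}" using u s by auto
      qed
      have "continuous_on {0..1} (\<lambda>u. ch (r * u))"
        by (rule continuous_on_compose2[OF cont _ im1']) (intro continuous_intros)
      then show "continuous_on {0..1} k1" unfolding k1_def using s by (intro continuous_intros) auto
    qed
    have I1k2: "I1 k2"
      unfolding I1_def
    proof (intro conjI)
      show "mono_on {0..1} k2" unfolding mono_on_def k2_def
      proof (intro allI impI)
        fix x y :: real assume xy: "x \<in> {0..1} \<and> y \<in> {0..1} \<and> x \<le> y"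
        then have "r + (1 - r) * x \<in> {0..1}" "r + (1 - r) * y \<in> {0..1}" using aff1[OF r0 r1, of x] aff1[OF r0 r1, of y] by auto
        moreover have "r + (1 - r) * x \<le> r + (1 - r) * y" using xy r1 by (simp add: mult_left_mono)
        ultimately show "(ch (r + (1 - r) * x) - s) / (1 - s) \<le> (ch (r + (1 - r) * y) - s) / (1 - s)"
          using mono s by (simp add: divide_right_mono)
      qed
      show "k2 ` {0..1} \<subseteq> {0..1}"
      proof
        fix x assume "x \<in> k2 ` {0..1}"
        then obtain u where u: "u \<in> {0..1}" "x = (ch (r + (1 - r) * u) - s) / (1 - s)" unfolding k2_def by blast
        have ru: "r + (1 - r) * u \<in> {0..1}" "r \<le> r + (1 - r) * u" using aff1[OF r0 r1, of u] u by auto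
        have "s \<le> ch (r + (1 - r) * u)" using mono[OF _ ru(1) ru(2)] r by simp
        moreover have "ch (r + (1 - r) * u) \<le> 1" using rng[OF ru(1)] by simp
        ultimately show "x \<in> {0..1}" using u s by auto
      qed
      have "continuous_on {0..1} (\<lambda>u. ch (r + (1 - r) * u))"
        by (rule continuous_on_compose2[OF cont _ im2']) (intro continuous_intros)
      then show "continuous_on {0..1} k2" unfolding k2_def using s by (intro continuous_intros) auto
    qed
    have e2: "(a \<circ> k1) 1 = (b \<circ> k2) 0" using r s e by (simp add: k1_def k2_def)
    have P: "path_in (gcomp r (a \<circ> k1) (b \<circ> k2)) D" by (rule G[OF r0 r1 A[OF I1k1] B[OF I1k2] e2])
    have "\<forall>t\<in>{0..1}. (gcomp s a b \<circ> ch) t = gcomp r (a \<circ> k1) (b \<circ> k2) t"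
    proof
      fix t :: real assume t: "t \<in> {0..1}"
      show "(gcomp s a b \<circ> ch) t = gcomp r (a \<circ> k1) (b \<circ> k2) t"
      proof (cases "t \<le> r")
        case True
        have "ch t \<le> s" using mono[OF t _ True] r by simp
        moreover have "r * (t / r) = t" using r0 by simp
        ultimately show ?thesis using True by (simp add: gcomp_def k1_def)
      next
        case False
        have ge: "s \<le> ch t" using mono[of r t] t r False by simp
        have eq: "r + (1 - r) * ((t - r) / (1 - r)) = t" using r1 by simp
        show ?thesis
        proof (cases "ch t \<le> s")
          case True
          then have "ch t = s" using ge by simp
          then show ?thesis using False s e eq by (simp add: gcomp_def k2_def)
        next
          case False2: False
          then show ?thesis using False eq by (simp add: gcomp_def k2_def)
        qed
      qed
    qed
    then show ?thesis using P path_in_cong by blast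
  qed
qed


lemma d_I1:
  assumes "dspace (T, D)" "path_in p D" "I1 k"
  shows "path_in (p \<circ> k) D"
proof -
  obtain d where d: "d \<in> D" "\<forall>t\<in>{0..1}. p t = d t" using assms(2) unfolding path_in_def by blast
  have "path_in (d \<circ> k) D" using assms(1) d(1) assms(3) unfolding dspace_def by auto
  moreover have "\<forall>t\<in>{0..1}. (p \<circ> k) t = (d \<circ> k) t" using d(2) I1_range[OF assms(3)] by simp
  ultimately show ?thesis using path_in_cong by blast
qed

lemma d_ncomp:
  assumes "dspace (T, D)" "path_in p D" "path_in q D" "p 1 = q 0"
  shows "path_in (ncomp p q) D"
proof -
  obtain d1 where d1: "d1 \<in> D" "\<forall>t\<in>{0..1}. p t = d1 t" using assms(2) unfolding path_in_def by blast
  obtain d2 where d2: "d2 \<in> D" "\<forall>t\<in>{0..1}. q t = d2 t" using assms(3) unfolding path_in_def by blast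
  have "d1 1 = d2 0" using assms(4) d1 d2 by simp
  then have "path_in (ncomp d1 d2) D" using assms(1) d1(1) d2(1) unfolding dspace_def by auto
  moreover have "\<forall>t\<in>{0..1}. ncomp p q t = ncomp d1 d2 t"
    unfolding ncomp_gcomp by (rule gcomp_cong) (use d1 d2 in auto)
  ultimately show ?thesis using path_in_cong by blast
qed

lemma half_sum: "a \<le> 1/2 \<Longrightarrow> b \<le> 1/2 \<Longrightarrow> 0 \<le> a \<Longrightarrow> 0 \<le> b \<Longrightarrow> 0 \<le> a + b \<and> a + b \<le> (1::real)"
  by linarith

lemma d_G:
  assumes D: "dspace (T, D)" and r: "0 < r" "r < 1" and p: "path_in p D" and q: "path_in q D" and e: "p 1 = q 0"
  shows "path_in (gcomp r p q) D"
proof -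
  define psi where "psi = (\<lambda>t::real. min t r / (2 * r) + max (t - r) 0 / (2 * (1 - r)))"
  have I: "I1 psi"
    unfolding I1_def
  proof (intro conjI)
    show "mono_on {0..1} psi" unfolding mono_on_def psi_def
    proof (intro allI impI)
      fix x y :: real assume "x \<in> {0..1} \<and> y \<in> {0..1} \<and> x \<le> y"
      then have "min x r \<le> min y r" "max (x - r) 0 \<le> max (y - r) 0" by auto
      then show "min x r / (2 * r) + max (x - r) 0 / (2 * (1 - r)) \<le> min y r / (2 * r) + max (y - r) 0 / (2 * (1 - r))"
        using r by (intro add_mono divide_right_mono) auto
    qed
    show "psi ` {0..1} \<subseteq> {0..1}"
    proof
      fix x assume "x \<in> psi ` {0..1}"
      then obtain t where t: "t \<in> {0..1}" "x = psi t" by blast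
      have a1: "min t r / (2 * r) \<le> 1/2" using r by (simp add: divide_le_eq)
      have m: "max (t - r) 0 \<le> 1 - r" using r t by auto
      have "max (t - r) 0 / (2 * (1 - r)) \<le> (1 - r) / (2 * (1 - r))"
        by (rule divide_right_mono[OF m]) (use r in simp)
      also have "\<dots> = 1/2" using r by simp
      finally have a2: "max (t - r) 0 / (2 * (1 - r)) \<le> 1/2" .
      have a3: "0 \<le> min t r / (2 * r)" using r t by simp
      have a4: "0 \<le> max (t - r) 0 / (2 * (1 - r))" using r by simp
      have pt: "psi t = min t r / (2 * r) + max (t - r) 0 / (2 * (1 - r))" unfolding psi_def by (rule refl)
      show "x \<in> {0..1}" unfolding atLeastAtMost_iff using half_sum[OF a1 a2 a3 a4] pt t(2) by simp
    qed
    show "continuous_on {0..1} psi" unfolding psi_def using r by (intro continuous_intros) auto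
  qed
  have "path_in (ncomp p q \<circ> psi) D" using d_I1[OF D d_ncomp[OF D p q e] I] .
  moreover have "\<forall>t\<in>{0..1}. gcomp r p q t = (ncomp p q \<circ> psi) t"
  proof
    fix t :: real assume t: "t \<in> {0..1}"
    show "gcomp r p q t = (ncomp p q \<circ> psi) t"
    proof (cases "t \<le> r")
      case True
      then have ps: "psi t = t / (2 * r)" unfolding psi_def by simp
      have n: "psi t \<le> 1/2" using True r ps by (simp add: divide_le_eq)
      have e2: "2 * psi t = t / r" using ps by simp
      show ?thesis unfolding gcomp_def ncomp_def o_def using True n e2 by simp
    next
      case False
      then have ps: "psi t = 1/2 + (t - r) / (2 * (1 - r))" unfolding psi_def using r by simp
      have pos: "0 < (t - r) / (2 * (1 - r))" using False r by simp
      have n: "\<not> psi t \<le> 1/2" using ps pos by linarith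
      have e2: "2 * psi t - 1 = (t - r) / (1 - r)" unfolding ps using r by (simp add: field_simps)
      show ?thesis unfolding gcomp_def ncomp_def o_def using False n e2 by simp
    qed
  qed
  ultimately show ?thesis using path_in_cong by blast
qed

lemma comp_moore:
  assumes G: "\<And>r p q. 0 < r \<Longrightarrow> r < 1 \<Longrightarrow> path_in p D \<Longrightarrow> path_in q D \<Longrightarrow> p 1 = q 0 \<Longrightarrow> path_in (gcomp r p q) D"
    and "lgood cs" "\<forall>x\<in>set cs. path_in (f \<circ> fst x) D"
  shows "path_in (f \<circ> moore cs) D"
proof (rule good_induct[where R="\<lambda>c. path_in (f \<circ> c) D" and Q="\<lambda>\<rho>. path_in (f \<circ> \<rho>) D", OF assms(2,3)])
  fix l :: real and c \<rho>
  assume h: "0 < l" "l < 1" "path_in (f \<circ> c) D" "path_in (f \<circ> \<rho>) D" "c 1 = \<rho> 0"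
  have "f \<circ> gcomp l c \<rho> = gcomp l (f \<circ> c) (f \<circ> \<rho>)" by (simp add: gcomp_def fun_eq_iff)
  then show "path_in (f \<circ> gcomp l c \<rho>) D" using G[OF h(1,2,3,4)] h(5) by simp
qed

lemma sp_I1:
  assumes "d \<in> sp_paths T P" "I1 k"
  shows "path_in (d \<circ> k) (sp_paths T P)"
  using sp_cases[OF assms(1)]
proof
  assume "\<exists>x\<in>topspace T. d = (\<lambda>t. x)"
  then obtain x where x: "x \<in> topspace T" "d = (\<lambda>t. x)" by blast
  have "d \<circ> k = (\<lambda>t. x)" using x(2) by (simp add: o_def)
  then show ?thesis using path_in_mem[OF sp_const[OF x(1)]] by simp
next
  assume "\<exists>cs. lgood cs \<and> (\<forall>x\<in>set cs. pc P (fst x)) \<and> d = moore cs"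
  then obtain cs where cs: "lgood cs" "\<forall>x\<in>set cs. pc P (fst x)" "d = moore cs" by blast
  have "\<forall>k. I1 k \<longrightarrow> path_in (moore cs \<circ> k) (sp_paths T P)"
  proof (rule good_induct[where R="pc P" and Q="\<lambda>\<rho>. \<forall>k. I1 k \<longrightarrow> path_in (\<rho> \<circ> k) (sp_paths T P)", OF cs(1,2)])
    fix c assume "pc P c" then show "\<forall>k. I1 k \<longrightarrow> path_in (c \<circ> k) (sp_paths T P)" using pc_I1 by blast
  next
    fix l :: real and c \<rho>
    assume h: "0 < l" "l < 1" "pc P c" "\<forall>k. I1 k \<longrightarrow> path_in (\<rho> \<circ> k) (sp_paths T P)" "c 1 = \<rho> 0"
    show "\<forall>k. I1 k \<longrightarrow> path_in (gcomp l c \<rho> \<circ> k) (sp_paths T P)"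
    proof (intro allI impI)
      fix k assume "I1 k"
      show "path_in (gcomp l c \<rho> \<circ> k) (sp_paths T P)"
      proof (rule gcomp_I1[where D="sp_paths T P" and a=c and b=\<rho> and s=l, OF h(1,2,5)])
        show "\<And>k. I1 k \<Longrightarrow> path_in (c \<circ> k) (sp_paths T P)" by (rule pc_I1[OF h(3)])
        show "\<And>k. I1 k \<Longrightarrow> path_in (\<rho> \<circ> k) (sp_paths T P)" using h(4) by blast
        show "\<And>r p q. 0 < r \<Longrightarrow> r < 1 \<Longrightarrow> path_in p (sp_paths T P) \<Longrightarrow> path_in q (sp_paths T P) \<Longrightarrow> p 1 = q 0 \<Longrightarrow> path_in (gcomp r p q) (sp_paths T P)"
          by (rule sp_G)
        show "I1 k" by fact
      qed
    qed
  qed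
  then show ?thesis using assms(2) cs(3) by blast
qed

lemma sp_is_path:
  assumes "mdspace (T, S, P)" "d \<in> sp_paths T P"
  shows "is_path T d"
proof -
  have PP: "\<forall>g\<in>P. is_path T g" using assms(1) unfolding mdspace_def by auto
  show ?thesis using sp_cases[OF assms(2)]
  proof
    assume "\<exists>x\<in>topspace T. d = (\<lambda>t. x)"
    then show ?thesis by (auto simp: is_path_def)
  next
    assume "\<exists>cs. lgood cs \<and> (\<forall>x\<in>set cs. pc P (fst x)) \<and> d = moore cs"
    then obtain cs where cs: "lgood cs" "\<forall>x\<in>set cs. pc P (fst x)" "d = moore cs" by blast
    have "is_path T (moore cs)"
    proof (rule good_induct[where R="pc P" and Q="is_path T", OF cs(1,2)])
      fix c assume "pc P c"
      then obtain g \<phi> where g: "g \<in> P" "I1 \<phi>" "c = g \<circ> \<phi>" unfolding pc_def by blast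
      show "is_path T c" unfolding is_path_def g(3)
        by (rule cm_comp) (use PP g(1) g(2) in \<open>auto simp: I1_def\<close>)
    next
      fix l :: real and c \<rho>
      assume h: "0 < l" "l < 1" "pc P c" "is_path T \<rho>" "c 1 = \<rho> 0"
      from h(3) obtain g \<phi> where g: "g \<in> P" "I1 \<phi>" "c = g \<circ> \<phi>" unfolding pc_def by blast
      have "is_path T c" unfolding is_path_def g(3)
        by (rule cm_comp) (use PP g(1) g(2) in \<open>auto simp: I1_def\<close>)
      then show "is_path T (gcomp l c \<rho>)" using is_path_gcomp h by blast
    qed
    then show ?thesis using cs by simp
  qed
qed

lemma dspace_Sp:
  assumes "mdspace (T, S, P)"
  shows "dspace (T, sp_paths T P)"
  unfolding dspace_def
proof (simp only: prod.case, intro conjI ballI allI impI)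
  show "delta_generated T" using assms unfolding mdspace_def by simp
  fix g assume "g \<in> sp_paths T P" then show "is_path T g" using sp_is_path[OF assms] by blast
next
  fix x assume "x \<in> topspace T" then show "path_in (\<lambda>t. x) (sp_paths T P)" using sp_const path_in_mem by metis
next
  fix g k assume "g \<in> sp_paths T P" "I1 k" then show "path_in (g \<circ> k) (sp_paths T P)" using sp_I1 by blast
next
  fix g1 g2 assume "g1 \<in> sp_paths T P" "g2 \<in> sp_paths T P" "g1 1 = g2 0"
  then show "path_in (ncomp g1 g2) (sp_paths T P)" unfolding ncomp_gcomp by (intro sp_gcomp_mem) auto
qed

lemma mdspace_Omega:
  assumes "dspace (T, D)"
  shows "mdspace (T, topspace T, D)"
  unfolding mdspace_def
proof (simp only: prod.case, intro conjI ballI allI impI)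
  show "delta_generated T" using assms unfolding dspace_def by simp
  show "topspace T \<subseteq> topspace T" by simp
  fix g assume g: "g \<in> D"
  then have "is_path T g" using assms unfolding dspace_def by simp
  then show "is_path T g" "g 0 \<in> topspace T" "g 1 \<in> topspace T"
    unfolding is_path_def continuous_map_def by auto
next
  fix g k assume "g \<in> D" "M11 k" then show "path_in (g \<circ> k) D" using assms M11_I1 unfolding dspace_def by auto
next
  fix g1 g2 assume "g1 \<in> D" "g2 \<in> D" "g1 1 = g2 0"
  then show "path_in (ncomp g1 g2) D" using assms unfolding dspace_def by auto
qed

lemma sp_functor:
  assumes "mdmap (T, S, P) (T', S', P') f"
  shows "dmap (T, sp_paths T P) (T', sp_paths T' P') f"
  unfolding dmap_def
proof (simp only: prod.case, intro conjI ballI)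
  have cm: "continuous_map T T' f" and pp: "\<forall>g\<in>P. path_in (f \<circ> g) P'" using assms unfolding mdmap_def by auto
  show "continuous_map T T' f" by (rule cm)
  fix d assume d: "d \<in> sp_paths T P"
  show "path_in (f \<circ> d) (sp_paths T' P')" using sp_cases[OF d]
  proof
    assume "\<exists>x\<in>topspace T. d = (\<lambda>t. x)"
    then obtain x where x: "x \<in> topspace T" "d = (\<lambda>t. x)" by blast
    then have "f x \<in> topspace T'" using funcset_mem[OF continuous_map_funspace[OF cm] x(1)] by blast
    moreover have "f \<circ> d = (\<lambda>t. f x)" using x(2) by (simp add: o_def)
    ultimately show ?thesis using path_in_mem[OF sp_const[of "f x" T' P']] by simp
  next
    assume "\<exists>cs. lgood cs \<and> (\<forall>x\<in>set cs. pc P (fst x)) \<and> d = moore cs"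
    then obtain cs where cs: "lgood cs" "\<forall>x\<in>set cs. pc P (fst x)" "d = moore cs" by blast
    have "\<forall>x\<in>set cs. path_in (f \<circ> fst x) (sp_paths T' P')"
    proof
      fix x assume "x \<in> set cs"
      then obtain g \<phi> where g: "g \<in> P" "I1 \<phi>" "fst x = g \<circ> \<phi>" using cs(2) unfolding pc_def by blast
      obtain h where h: "h \<in> P'" "\<forall>t\<in>{0..1}. (f \<circ> g) t = h t" using pp g(1) unfolding path_in_def by blast
      have "pc P' (h \<circ> \<phi>)" using h g unfolding pc_def by blast
      then have "moore [(h \<circ> \<phi>, 1)] \<in> sp_paths T' P'" by (intro sp_moore) (auto simp: lgood_single)
      then have "path_in (moore [(h \<circ> \<phi>, 1)]) (sp_paths T' P')" by (rule path_in_mem)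
      then have "path_in (h \<circ> \<phi>) (sp_paths T' P')" by (simp only: moore_single1)
      moreover have "\<forall>t\<in>{0..1}. (f \<circ> fst x) t = (h \<circ> \<phi>) t" using h g I1_range[OF g(2)] by simp
      ultimately show "path_in (f \<circ> fst x) (sp_paths T' P')" using path_in_cong by blast
    qed
    then show ?thesis using comp_moore[OF sp_G cs(1)] cs(3) by blast
  qed
qed

lemma om_functor:
  assumes "dmap (T, D) (T', D') g"
  shows "mdmap (T, topspace T, D) (T', topspace T', D') g"
  using assms unfolding dmap_def mdmap_def by (auto dest: continuous_map_image_subset_topspace)

lemma adj:
  assumes X: "mdspace (T, S, P)" and Y: "dspace (TY, D)"
  shows "dmap (T, sp_paths T P) (TY, D) f \<longleftrightarrow> mdmap (T, S, P) (TY, topspace TY, D) f"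
proof
  assume a: "dmap (T, sp_paths T P) (TY, D) f"
  have cm: "continuous_map T TY f" using a unfolding dmap_def by simp
  have S: "S \<subseteq> topspace T" using X unfolding mdspace_def by simp
  have "\<forall>g\<in>P. path_in (f \<circ> g) D"
  proof
    fix g assume "g \<in> P"
    moreover have "g = g \<circ> (\<lambda>t. t)" by (simp add: o_def)
    ultimately have "pc P g" unfolding pc_def using I1_id by blast
    then have "moore [(g, 1)] \<in> sp_paths T P" by (intro sp_moore) (auto simp: lgood_single)
    then show "path_in (f \<circ> g) D" using a unfolding dmap_def by simp
  qed
  moreover have "f ` S \<subseteq> topspace TY" using cm S by (meson continuous_map_image_subset_topspace image_mono order_trans)
  ultimately show "mdmap (T, S, P) (TY, topspace TY, D) f" using cm unfolding mdmap_def by simp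
next
  assume a: "mdmap (T, S, P) (TY, topspace TY, D) f"
  have cm: "continuous_map T TY f" and pp: "\<forall>g\<in>P. path_in (f \<circ> g) D" using a unfolding mdmap_def by auto
  have "\<forall>d\<in>sp_paths T P. path_in (f \<circ> d) D"
  proof
    fix d assume d: "d \<in> sp_paths T P"
    show "path_in (f \<circ> d) D" using sp_cases[OF d]
    proof
      assume "\<exists>x\<in>topspace T. d = (\<lambda>t. x)"
      then obtain x where x: "x \<in> topspace T" "d = (\<lambda>t. x)" by blast
      then have "f x \<in> topspace TY" using funcset_mem[OF continuous_map_funspace[OF cm] x(1)] by blast
      then show ?thesis using x Y unfolding dspace_def by (simp add: comp_def)
    next
      assume "\<exists>cs. lgood cs \<and> (\<forall>x\<in>set cs. pc P (fst x)) \<and> d = moore cs"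
      then obtain cs where cs: "lgood cs" "\<forall>x\<in>set cs. pc P (fst x)" "d = moore cs" by blast
      have "\<forall>x\<in>set cs. path_in (f \<circ> fst x) D"
      proof
        fix x assume "x \<in> set cs"
        then obtain g \<phi> where g: "g \<in> P" "I1 \<phi>" "fst x = g \<circ> \<phi>" using cs(2) unfolding pc_def by blast
        have "path_in ((f \<circ> g) \<circ> \<phi>) D" using d_I1[OF Y _ g(2)] pp g(1) by blast
        then show "path_in (f \<circ> fst x) D" using g(3) by (simp add: o_assoc)
      qed
      then show ?thesis using comp_moore[OF d_G[OF Y] cs(1)] cs(3) by blast
    qed
  qed
  then show "dmap (T, sp_paths T P) (TY, D) f" using cm unfolding dmap_def by simp
qed

theorem theorem3p5:
  fixes X :: "'a mdspace" and Y :: "'b dspace"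
  assumes "mdspace X" and "dspace Y"
  shows "dspace (Sp X) \<and> mdspace (Omega Y)
    \<and> (\<forall>(X' :: 'c mdspace) f. mdspace X' \<and> mdmap X X' f \<longrightarrow> dmap (Sp X) (Sp X') f)
    \<and> (\<forall>(Y' :: 'd dspace) g. dspace Y' \<and> dmap Y Y' g \<longrightarrow> mdmap (Omega Y) (Omega Y') g)
    \<and> (\<forall>f :: 'a \<Rightarrow> 'b. dmap (Sp X) Y f \<longleftrightarrow> mdmap X (Omega Y) f)"
  proof -
  obtain T S P where X: "X = (T, S, P)" using prod_cases3 by blast
  obtain TY D where Y: "Y = (TY, D)" by (cases Y)
  have mX: "mdspace (T, S, P)" using assms(1) X by simp
  have dY: "dspace (TY, D)" using assms(2) Y by simp
  have 1: "dspace (Sp X)" using dspace_Sp[OF mX] X by (simp add: Sp_def)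
  have 2: "mdspace (Omega Y)" using mdspace_Omega[OF dY] Y by (simp add: Omega_def)
  have 3: "\<forall>(X' :: 'c mdspace) f. mdspace X' \<and> mdmap X X' f \<longrightarrow> dmap (Sp X) (Sp X') f"
  proof (intro allI impI)
    fix X' :: "'c mdspace" and f
    assume h: "mdspace X' \<and> mdmap X X' f"
    obtain T' S' P' where X': "X' = (T', S', P')" using prod_cases3 by blast
    show "dmap (Sp X) (Sp X') f" using sp_functor[of T S P T' S' P' f] h X X' by (simp add: Sp_def)
  qed
  have 4: "\<forall>(Y' :: 'd dspace) g. dspace Y' \<and> dmap Y Y' g \<longrightarrow> mdmap (Omega Y) (Omega Y') g"
  proof (intro allI impI)
    fix Y' :: "'d dspace" and g
    assume h: "dspace Y' \<and> dmap Y Y' g"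
    obtain T' D' where Y': "Y' = (T', D')" by (cases Y')
    show "mdmap (Omega Y) (Omega Y') g" using om_functor[of TY D T' D' g] h Y Y' by (simp add: Omega_def)
  qed
  have 5: "\<forall>f :: 'a \<Rightarrow> 'b. dmap (Sp X) Y f \<longleftrightarrow> mdmap X (Omega Y) f"
    using adj[OF mX dY] X Y by (simp add: Sp_def Omega_def)
  show ?thesis using 1 2 3 4 5 by blast
qed
end
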